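(* Let $\psi\in\mathcal K$ have radius of convergence $R_\psi>0$ and Khinchin family $(Y_t)$. For $t\in(0,R_\psi)$ let $q(t)$ be the extinction probability of the Galton–Watson process with offspring distribution $Y_t$, and $q(0)=1$. Then $q$ is continuous on $[0,R_\psi)$.
   Context: $\mathcal K$ is the class of non-constant power series $f(z)=\sum_{n\ge0}a_nz^n$ with positive radius of convergence $R$, non-negative coefficients and $a_0>0$; its Khinchin family $(X_t)_{t\in[0,R)}$ is given by $\mathbf P(X_t=n)=a_nt^n/f(t)$ for $n\ge0$, $t\in(0,R)$, and $X_0\equiv0$ (so the process with offspring $Y_0$ is a single node and goes extinct, consistently with $q(0)=1$). The extinction probability is the probability that the Galton–Watson tree is finite. *)

theory Defs
  imports "HOL-Analysis.Analysis" "HOL-Probability.Probability_Mass_Function"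
begin

definition in_class_K :: "(nat \<Rightarrow> real) \<Rightarrow> bool" where
  "in_class_K a \<longleftrightarrow> (\<forall>n. a n \<ge> 0) \<and> a 0 > 0 \<and> (\<exists>n>0. a n \<noteq> 0)
     \<and> conv_radius a > 0"

definition pseries :: "(nat \<Rightarrow> real) \<Rightarrow> real \<Rightarrow> real" where
  "pseries a t = (\<Sum>n. a n * t ^ n)"

text \<open>Khinchin family: P(X_t = n) = a_n t^n / f(t) (for t = 0 this is the point mass at 0).\<close>
definition khinchin :: "(nat \<Rightarrow> real) \<Rightarrow> real \<Rightarrow> nat pmf" where
  "khinchin a t = embed_pmf (\<lambda>n. a n * t ^ n / pseries a t)"

fun iid_sum_pmf :: "nat pmf \<Rightarrow> nat \<Rightarrow> nat pmf" where
  "iid_sum_pmf p 0 = return_pmf 0"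
| "iid_sum_pmf p (Suc k) = bind_pmf p (\<lambda>x. map_pmf (\<lambda>y. x + y) (iid_sum_pmf p k))"

fun gw_generation :: "nat pmf \<Rightarrow> nat \<Rightarrow> nat pmf" where
  "gw_generation p 0 = return_pmf 1"
| "gw_generation p (Suc n) = bind_pmf (gw_generation p n) (iid_sum_pmf p)"

text \<open>Extinction probability: probability that the tree is finite, i.e. that some
  generation is empty: P(\<Union>n. {Z_n = 0}) = lim P(Z_n = 0) (increasing events).\<close>
definition extinction_prob :: "nat pmf \<Rightarrow> real" where
  "extinction_prob p = lim (\<lambda>n. pmf (gw_generation p n) 0)"

end

theory Submission
  imports Defs
begin

lemma ps_summable:
  assumes "ereal \<bar>x\<bar> < conv_radius a"
  shows "summable (\<lambda>n. a n * x ^ n)"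
  using summable_in_conv_radius[of x a] assms by simp

lemma ps_isCont:
  assumes "ereal \<bar>x\<bar> < conv_radius a"
  shows "isCont (pseries a) x"
proof -
  obtain K where K: "ereal \<bar>x\<bar> < ereal K" "ereal K < conv_radius a"
    using ereal_dense2[OF assms] by blast
  have "\<bar>K\<bar> = K" using K(1) by auto
  then have s: "summable (\<lambda>n. a n * K ^ n)" using ps_summable[of K a] K by simp
  have "norm x < norm K" using K \<open>\<bar>K\<bar> = K\<close> by auto
  have "isCont (\<lambda>x. \<Sum>n. a n * x^n) x" by (rule isCont_powser[OF s]) fact
  then show ?thesis unfolding pseries_def[abs_def] .
qed

lemma ps_mono:
  assumes "\<And>n. a n \<ge> 0" "0 \<le> x" "x \<le> y" "ereal y < conv_radius a"
  shows "pseries a x \<le> pseries a y"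
proof -
  have "ereal x < conv_radius a" using assms(3,4) by (meson ereal_less_eq(3) le_less_trans)
  then have sx: "summable (\<lambda>n. a n * x ^ n)" using assms by (intro ps_summable) auto
  have sy: "summable (\<lambda>n. a n * y ^ n)" using assms by (intro ps_summable) auto
  show ?thesis unfolding pseries_def
    by (rule suminf_le[OF _ sx sy]) (auto intro!: mult_left_mono power_mono assms)
qed

lemma ps_zero: "pseries a 0 = a 0"
  unfolding pseries_def by (rule powser_zero)

lemma ps_ge0:
  assumes "\<And>n. a n \<ge> 0" "0 \<le> x" "ereal x < conv_radius a"
  shows "a 0 \<le> pseries a x"
  using ps_mono[of a 0 x] assms ps_zero[of a] by simp

definition pgf :: "nat pmf \<Rightarrow> real \<Rightarrow> ennreal" where
  "pgf p s = (\<integral>\<^sup>+ k. ennreal (s ^ k) \<partial>measure_pmf p)"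

definition pgr :: "nat pmf \<Rightarrow> real \<Rightarrow> real" where
  "pgr p s = enn2real (pgf p s)"

lemma pgf_return: "pgf (return_pmf a) s = ennreal (s ^ a)"
  unfolding pgf_def by simp

lemma pgf_iid:
  assumes "0 \<le> s"
  shows "pgf (iid_sum_pmf p k) s = (pgf p s) ^ k"
proof (induction k)
  case 0
  then show ?case by (simp add: pgf_return)
next
  case (Suc k)
  have "pgf (iid_sum_pmf p (Suc k)) s
      = (\<integral>\<^sup>+ x. (\<integral>\<^sup>+ y. ennreal (s ^ x) * ennreal (s ^ y) \<partial>measure_pmf (iid_sum_pmf p k)) \<partial>measure_pmf p)"
    unfolding pgf_def using assms by (simp add: power_add ennreal_mult)
  also have "\<dots> = (\<integral>\<^sup>+ x. ennreal (s ^ x) * pgf p s ^ k \<partial>measure_pmf p)"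
    using Suc by (simp add: nn_integral_cmult pgf_def)
  also have "\<dots> = pgf p s * pgf p s ^ k"
    by (simp add: nn_integral_multc pgf_def)
  finally show ?case by simp
qed

lemma pgf_le1:
  assumes "0 \<le> s" "s \<le> 1"
  shows "pgf p s \<le> 1"
proof -
  have "pgf p s \<le> (\<integral>\<^sup>+ k. 1 \<partial>measure_pmf p)"
    unfolding pgf_def using assms by (intro nn_integral_mono) (simp add: power_le_one)
  also have "\<dots> = 1" by simp
  finally show ?thesis .
qed

lemma pgf_eq:
  assumes "0 \<le> s" "s \<le> 1"
  shows "pgf p s = ennreal (pgr p s)" "0 \<le> pgr p s" "pgr p s \<le> 1"
proof -
  have "pgf p s \<le> 1" using pgf_le1 assms by blast
  then have "pgf p s < top" using ennreal_one_less_top le_less_trans by blast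
  then show "pgf p s = ennreal (pgr p s)" unfolding pgr_def by simp
  show "0 \<le> pgr p s" unfolding pgr_def by simp
  show "pgr p s \<le> 1" unfolding pgr_def using \<open>pgf p s \<le> 1\<close>
    using enn2real_mono[of "pgf p s" 1] by simp
qed

lemma pgf_gw:
  assumes "0 \<le> s" "s \<le> 1"
  shows "pgf (gw_generation p n) s = ennreal ((pgr p ^^ n) s)"
  using assms
proof (induction n arbitrary: s)
  case 0
  then show ?case by (simp add: pgf_return)
next
  case (Suc n)
  have "pgf (gw_generation p (Suc n)) s
      = (\<integral>\<^sup>+ k. pgf (iid_sum_pmf p k) s \<partial>measure_pmf (gw_generation p n))"
    unfolding pgf_def by simp
  also have "\<dots> = (\<integral>\<^sup>+ k. ennreal (pgr p s ^ k) \<partial>measure_pmf (gw_generation p n))"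
    using Suc.prems pgf_eq[of s p] by (simp add: pgf_iid ennreal_power)
  also have "\<dots> = pgf (gw_generation p n) (pgr p s)" unfolding pgf_def ..
  also have "\<dots> = ennreal ((pgr p ^^ n) (pgr p s))"
    using Suc.IH pgf_eq[of s p] Suc.prems by simp
  finally show ?case by (simp only: funpow_Suc_right comp_def)
qed

lemma pmf_0_pgf: "pmf p 0 = pgr p 0"
proof -
  have "pgf p 0 = (\<integral>\<^sup>+ k. indicator {0} k \<partial>measure_pmf p)"
    unfolding pgf_def by (intro nn_integral_cong) (auto simp: indicator_def)
  also have "\<dots> = emeasure (measure_pmf p) {0}" by simp
  also have "\<dots> = ennreal (pmf p 0)" by (simp add: emeasure_pmf_single)
  finally show ?thesis unfolding pgr_def by simp
qed

lemma pgr_iter: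
  assumes "0 \<le> s" "s \<le> 1"
  shows "0 \<le> (pgr p ^^ n) s \<and> (pgr p ^^ n) s \<le> 1"
  using assms by (induction n) (auto simp: pgf_eq)

lemma pmf_gw_0: "pmf (gw_generation p n) 0 = (pgr p ^^ n) 0"
  using pmf_0_pgf[of "gw_generation p n"] pgf_gw[of 0 p n] pgr_iter[where s=0 and p=p and n=n]
  by (simp add: pgr_def)

lemma khin_pmf:
  assumes nn: "\<And>n. a n \<ge> 0" and a0: "a 0 > 0" and t: "0 \<le> t" "ereal t < conv_radius a"
  shows "pmf (khinchin a t) n = a n * t ^ n / pseries a t"
proof -
  have fpos: "pseries a t > 0" using ps_ge0[of a t] nn a0 t by simp
  have sm: "summable (\<lambda>n. a n * t ^ n)" using t by (intro ps_summable) auto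
  have "(\<lambda>n. a n * t ^ n / pseries a t) sums (pseries a t / pseries a t)"
    using sm unfolding pseries_def by (intro sums_divide summable_sums)
  then have s1: "(\<lambda>n. a n * t ^ n / pseries a t) sums 1" using fpos by simp
  have nn2: "\<forall>n. 0 \<le> a n * t ^ n / pseries a t" using nn t fpos by simp
  have "(\<integral>\<^sup>+n. ennreal (a n * t ^ n / pseries a t) \<partial>count_space UNIV)
        = (\<Sum>n. ennreal (a n * t ^ n / pseries a t))" by (rule nn_integral_count_space_nat)
  also have "\<dots> = ennreal (\<Sum>n. a n * t ^ n / pseries a t)"
    by (rule suminf_ennreal2[OF _ sums_summable[OF s1]]) (use nn2 in auto)
  also have "\<dots> = ennreal 1" using sums_unique[OF s1] by simp
  finally have pr: "(\<integral>\<^sup>+n. ennreal (a n * t ^ n / pseries a t) \<partial>count_space UNIV) = 1" by simp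
  show ?thesis unfolding khinchin_def
    by (rule pmf_embed_pmf) (use nn2 pr in auto)
qed

lemma khin_pgr:
  assumes nn: "\<And>n. a n \<ge> 0" and a0: "a 0 > 0" and t: "0 \<le> t" "ereal t < conv_radius a"
    and s: "0 \<le> s" "s \<le> 1"
  shows "pgr (khinchin a t) s = pseries a (t * s) / pseries a t"
proof -
  have fpos: "pseries a t > 0" using ps_ge0[of a t] nn a0 t by simp
  have "ereal \<bar>t * s\<bar> \<le> ereal t" using t s by (simp add: abs_mult mult_left_le)
  then have sm: "summable (\<lambda>n. a n * (t * s) ^ n)" using t
    by (intro ps_summable) (meson le_less_trans)
  have eq: "\<And>n. a n * t ^ n / pseries a t * s ^ n = a n * (t * s) ^ n / pseries a t"
    by (simp add: power_mult_distrib)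
  have "(\<lambda>n. a n * (t * s) ^ n / pseries a t) sums (pseries a (t * s) / pseries a t)"
    using sm unfolding pseries_def by (intro sums_divide summable_sums)
  then have sm2: "(\<lambda>n. a n * t ^ n / pseries a t * s ^ n) sums (pseries a (t * s) / pseries a t)"
    unfolding eq .
  have "pgf (khinchin a t) s = (\<integral>\<^sup>+n. ennreal (pmf (khinchin a t) n) * ennreal (s ^ n) \<partial>count_space UNIV)"
    unfolding pgf_def by (rule nn_integral_measure_pmf)
  also have "\<dots> = (\<Sum>n. ennreal (a n * t ^ n / pseries a t * s ^ n))"
  proof (subst nn_integral_count_space_nat, rule suminf_cong)
    fix n
    have "ennreal (a n * t ^ n / pseries a t * s ^ n) = ennreal (a n * t ^ n / pseries a t) * ennreal (s ^ n)"
      by (rule ennreal_mult) (use nn t s fpos in auto)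
    then show "ennreal (pmf (khinchin a t) n) * ennreal (s ^ n) = ennreal (a n * t ^ n / pseries a t * s ^ n)"
      by (simp only: khin_pmf[OF nn a0 t])
  qed
  also have "\<dots> = ennreal (\<Sum>n. a n * t ^ n / pseries a t * s ^ n)"
    by (rule suminf_ennreal2[OF _ sums_summable[OF sm2]]) (use nn t s fpos in simp)
  also have "\<dots> = ennreal (pseries a (t * s) / pseries a t)"
    using sums_unique[OF sm2] by simp
  finally have "pgf (khinchin a t) s = ennreal (pseries a (t * s) / pseries a t)" .
  moreover have "ereal (t * s) \<le> ereal t" using t s by (simp add: mult_left_le)
  then have "ereal (t * s) < conv_radius a" using t(2) by (rule le_less_trans)
  then have "a 0 \<le> pseries a (t * s)" by (intro ps_ge0) (use nn t s in auto)
  then have "0 \<le> pseries a (t * s)" using a0 by linarith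
  moreover have "0 \<le> pseries a (t * s) / pseries a t" using fpos \<open>0 \<le> pseries a (t * s)\<close> by simp
  ultimately show ?thesis unfolding pgr_def by (metis enn2real_ennreal)
qed

lemma fixpt:
  fixes g :: "real \<Rightarrow> real"
  assumes mono: "\<And>x y. 0 \<le> x \<Longrightarrow> x \<le> y \<Longrightarrow> y \<le> 1 \<Longrightarrow> g x \<le> g y"
    and rng: "\<And>x. 0 \<le> x \<Longrightarrow> x \<le> 1 \<Longrightarrow> 0 \<le> g x \<and> g x \<le> 1"
    and cont: "continuous_on {0..1} g"
  defines "L \<equiv> lim (\<lambda>n. (g ^^ n) 0)"
  shows "(\<lambda>n. (g ^^ n) 0) \<longlonglongrightarrow> L" "g L = L" "0 \<le> L" "L \<le> 1"
    "\<And>s. 0 \<le> s \<Longrightarrow> s \<le> 1 \<Longrightarrow> g s \<le> s \<Longrightarrow> L \<le> s"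
    "\<And>n. (g ^^ n) 0 \<le> L"
proof -
  define x where "x n = (g ^^ n) 0" for n
  have xr: "0 \<le> x n \<and> x n \<le> 1" for n
    unfolding x_def by (induction n) (auto simp: rng)
  have xs: "x (Suc n) = g (x n)" for n unfolding x_def by simp
  have inc: "x n \<le> x (Suc n)" for n
  proof (induction n)
    case 0 then show ?case using rng[of 0] by (simp add: x_def)
  next
    case (Suc n) then show ?case using xr xs mono by metis
  qed
  have "incseq x" using inc by (simp add: incseq_SucI)
  moreover have "bdd_above (range x)" using xr by (auto intro!: bdd_aboveI[of _ 1])
  ultimately have lim: "x \<longlonglongrightarrow> (SUP i. x i)" using LIMSEQ_incseq_SUP by blast
  then have LL: "L = (SUP i. x i)" unfolding L_def x_def[abs_def] by (rule limI)
  show conv: "(\<lambda>n. (g ^^ n) 0) \<longlonglongrightarrow> L" using lim LL by (simp add: x_def[abs_def])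
  then have conv': "x \<longlonglongrightarrow> L" by (simp add: x_def[abs_def])
  show L0: "0 \<le> L" using conv' xr by (intro LIMSEQ_le_const[OF conv']) auto
  show L1: "L \<le> 1" using conv' xr by (intro LIMSEQ_le_const2[OF conv']) auto
  have "(\<lambda>n. g (x n)) \<longlonglongrightarrow> g L"
    by (rule continuous_on_tendsto_compose[OF cont conv']) (use L0 L1 xr in auto)
  moreover have "(\<lambda>n. g (x n)) \<longlonglongrightarrow> L"
    using LIMSEQ_Suc[OF conv'] unfolding xs .
  ultimately show "g L = L" by (rule LIMSEQ_unique)
  show "L \<le> s" if s: "0 \<le> s" "s \<le> 1" "g s \<le> s" for s
  proof -
    have "x n \<le> s" for n
    proof (induction n)
      case 0 then show ?case using s by (simp add: x_def)
    next
      case (Suc n) then show ?case using xr[of n] mono[of "x n" s] s xs[of n] by linarith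
    qed
    then show ?thesis by (intro LIMSEQ_le_const2[OF conv']) auto
  qed
  show "(g ^^ n) 0 \<le> L" for n
    using incseq_le[OF \<open>incseq x\<close> conv'] by (simp add: x_def)
qed

lemma funpow_eq_on:
  fixes F G :: "real \<Rightarrow> real"
  assumes "\<And>s. 0 \<le> s \<Longrightarrow> s \<le> 1 \<Longrightarrow> F s = G s"
    and "\<And>s. 0 \<le> s \<Longrightarrow> s \<le> 1 \<Longrightarrow> 0 \<le> G s \<and> G s \<le> 1"
  shows "(F ^^ n) 0 = (G ^^ n) 0 \<and> 0 \<le> (G ^^ n) 0 \<and> (G ^^ n) 0 \<le> 1"
  using assms by (induction n) auto

lemma poly_ineq:
  fixes L s :: real
  assumes "0 \<le> L" "L < s" "s < 1"
  shows "(1 - L) * (s ^ k - L ^ k) \<le> (s - L) * (1 - L ^ k)"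
    "k \<ge> 2 \<Longrightarrow> (1 - L) * (s ^ k - L ^ k) < (s - L) * (1 - L ^ k)"
proof -
  have pos: "0 < (1 - L) * (s - L)" using assms by simp
  have s0: "0 \<le> s" using assms by simp
  have main: "(1 - L) * (s ^ k - L ^ k) \<le> (s - L) * (1 - L ^ k) \<and>
     (k \<ge> 2 \<longrightarrow> (1 - L) * (s ^ k - L ^ k) < (s - L) * (1 - L ^ k))"
  proof (cases k)
    case 0 then show ?thesis by simp
  next
    case (Suc m)
    define A where "A = (\<Sum>p<Suc m. s ^ p * L ^ (m - p))"
    define B where "B = (\<Sum>p<Suc m. (1::real) ^ p * L ^ (m - p))"
    have eA: "s ^ k - L ^ k = (s - L) * A" unfolding A_def Suc by (rule diff_power_eq_sum)
    have eB: "1 ^ k - L ^ k = (1 - L) * B" unfolding B_def Suc by (rule diff_power_eq_sum)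
    have AB: "A \<le> B" unfolding A_def B_def
      using assms s0 power_le_one[OF s0] by (intro sum_mono mult_right_mono) auto
    have AB2: "A < B" if "k \<ge> 2"
      unfolding A_def B_def
    proof (rule sum_strict_mono_ex1)
      show "\<forall>p\<in>{..<Suc m}. s ^ p * L ^ (m - p) \<le> 1 ^ p * L ^ (m - p)"
        using assms s0 power_le_one[OF s0] by (auto intro!: mult_left_le_one_le)
      have "m \<ge> 1" using that Suc by simp
      then have "s ^ m \<le> s ^ 1" using s0 assms by (intro power_decreasing) auto
      then have "s ^ m < 1" using assms by simp
      then have "s ^ m * L ^ (m - m) < 1 ^ m * L ^ (m - m)" by simp
      then show "\<exists>p\<in>{..<Suc m}. s ^ p * L ^ (m - p) < 1 ^ p * L ^ (m - p)" by blast
    qed auto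
    have l: "(1 - L) * (s ^ k - L ^ k) = ((1 - L) * (s - L)) * A" using eA by simp
    have r: "(s - L) * (1 - L ^ k) = ((1 - L) * (s - L)) * B" using eB by simp
    show ?thesis unfolding l r using AB AB2 pos by (auto intro: mult_left_mono mult_strict_left_mono)
  qed
  then show "(1 - L) * (s ^ k - L ^ k) \<le> (s - L) * (1 - L ^ k)"
    "k \<ge> 2 \<Longrightarrow> (1 - L) * (s ^ k - L ^ k) < (s - L) * (1 - L ^ k)" by auto
qed

definition gg :: "(nat \<Rightarrow> real) \<Rightarrow> real \<Rightarrow> real \<Rightarrow> real" where
  "gg a t s = pseries a (t * s) / pseries a t"

lemma K_facts:
  assumes "in_class_K a"
  shows "\<And>n. a n \<ge> 0" "a 0 > 0" "\<exists>n>0. a n \<noteq> 0"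
  using assms unfolding in_class_K_def by auto

lemma ps_cont_on: "continuous_on {x. ereal \<bar>x\<bar> < conv_radius a} (pseries a)"
  by (intro continuous_at_imp_continuous_on ballI ps_isCont) auto

lemma ts_in:
  assumes "0 \<le> t" "ereal t < conv_radius a" "0 \<le> s" "s \<le> 1"
  shows "ereal \<bar>t * s\<bar> < conv_radius a" "ereal (t * s) < conv_radius a" "0 \<le> t * s"
proof -
  have "\<bar>t * s\<bar> = t * s" using assms by simp
  moreover have "t * s \<le> t" using assms by (simp add: mult_left_le)
  ultimately show "ereal \<bar>t * s\<bar> < conv_radius a" "ereal (t * s) < conv_radius a"
    using assms(2) by (auto intro: le_less_trans[of _ "ereal t"])
  show "0 \<le> t * s" using assms by simp
qed

lemma gg_range:
  assumes K: "in_class_K a" and t: "0 \<le> t" "ereal t < conv_radius a" and s: "0 \<le> s" "s \<le> 1"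
  shows "0 \<le> gg a t s \<and> gg a t s \<le> 1"
proof -
  note nn = K_facts(1)[OF K] and a0 = K_facts(2)[OF K]
  have fpos: "pseries a t > 0" using ps_ge0[of a t] nn a0 t by simp
  have "a 0 \<le> pseries a (t * s)" using ts_in[OF t s] nn by (intro ps_ge0) auto
  moreover have "pseries a (t * s) \<le> pseries a t"
    using ts_in[OF t s] nn t s by (intro ps_mono) (auto simp: mult_left_le)
  ultimately show ?thesis using fpos a0 unfolding gg_def by simp
qed

lemma gg_mono:
  assumes K: "in_class_K a" and t: "0 \<le> t" "ereal t < conv_radius a"
    and xy: "0 \<le> x" "x \<le> y" "y \<le> 1"
  shows "gg a t x \<le> gg a t y"
proof -
  note nn = K_facts(1)[OF K] and a0 = K_facts(2)[OF K]
  have fpos: "pseries a t > 0" using ps_ge0[of a t] nn a0 t by simp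
  have "pseries a (t * x) \<le> pseries a (t * y)"
    using ts_in[of t a y] t xy nn by (intro ps_mono) (auto intro: mult_left_mono)
  then show ?thesis unfolding gg_def using fpos by (simp add: divide_right_mono)
qed

lemma gg_cont_comp:
  assumes K: "in_class_K a"
    and h: "continuous_on {t. 0 \<le> t \<and> ereal t < conv_radius a} h"
    and hr: "\<And>t. 0 \<le> t \<Longrightarrow> ereal t < conv_radius a \<Longrightarrow> 0 \<le> h t \<and> h t \<le> 1"
  shows "continuous_on {t. 0 \<le> t \<and> ereal t < conv_radius a} (\<lambda>t. gg a t (h t))"
proof -
  note nn = K_facts(1)[OF K] and a0 = K_facts(2)[OF K]
  let ?I = "{t. 0 \<le> t \<and> ereal t < conv_radius a}"
  let ?O = "{x. ereal \<bar>x\<bar> < conv_radius a}"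
  have c1: "continuous_on ?I (\<lambda>t. pseries a (t * h t))"
  proof (rule continuous_on_compose2[OF ps_cont_on])
    show "continuous_on ?I (\<lambda>t. t * h t)" by (intro continuous_intros h)
    show "(\<lambda>t. t * h t) ` ?I \<subseteq> ?O"
    proof
      fix y assume "y \<in> (\<lambda>t. t * h t) ` ?I"
      then obtain x where x: "x \<in> ?I" "y = x * h x" by blast
      then show "y \<in> ?O" using ts_in(1)[of x a "h x"] hr[of x] by auto
    qed
  qed
  have c2: "continuous_on ?I (pseries a)"
  proof (rule continuous_on_subset[OF ps_cont_on])
    show "?I \<subseteq> ?O" by auto
  qed
  have "continuous_on ?I (\<lambda>t. pseries a (t * h t) / pseries a t)"
  proof (rule continuous_on_divide[OF c1 c2])
    show "\<forall>t\<in>?I. pseries a t \<noteq> 0" using ps_ge0[of a] nn a0 by force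
  qed
  then show ?thesis unfolding gg_def .
qed

lemma gg_cont_s:
  assumes K: "in_class_K a" and t: "0 \<le> t" "ereal t < conv_radius a"
  shows "continuous_on {0..1} (gg a t)"
proof -
  let ?O = "{x. ereal \<bar>x\<bar> < conv_radius a}"
  have "continuous_on {0..1} (\<lambda>s. pseries a (t * s))"
  proof (rule continuous_on_compose2[OF ps_cont_on])
    show "continuous_on {0..1} (\<lambda>s. t * s)" by (intro continuous_intros)
    show "(\<lambda>s. t * s) ` {0..1} \<subseteq> ?O" using ts_in[OF t] by auto
  qed
  moreover have "pseries a t \<noteq> 0"
    using ps_ge0[of a t] K_facts[OF K] t by force
  ultimately have "continuous_on {0..1} (\<lambda>s. pseries a (t * s) / pseries a t)"
    by (intro continuous_intros) auto
  then show ?thesis unfolding gg_def[abs_def] by simp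
qed

lemma Phi_cont:
  assumes K: "in_class_K a"
  shows "continuous_on {t. 0 \<le> t \<and> ereal t < conv_radius a} (\<lambda>t. (gg a t ^^ n) 0)
    \<and> (\<forall>t. 0 \<le> t \<longrightarrow> ereal t < conv_radius a \<longrightarrow> 0 \<le> (gg a t ^^ n) 0 \<and> (gg a t ^^ n) 0 \<le> 1)"
proof (induction n)
  case 0
  then show ?case by (simp add: continuous_on_const)
next
  case (Suc n)
  have "continuous_on {t. 0 \<le> t \<and> ereal t < conv_radius a} (\<lambda>t. gg a t ((gg a t ^^ n) 0))"
    using Suc by (intro gg_cont_comp[OF K]) auto
  then show ?case using Suc gg_range[OF K] by simp
qed

lemma q_char:
  assumes K: "in_class_K a"
    and qdef: "\<And>t. q t = (if t = 0 then 1 else extinction_prob (khinchin a t))"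
    and t: "0 \<le> t" "ereal t < conv_radius a"
  shows "(\<lambda>n. (gg a t ^^ n) 0) \<longlonglongrightarrow> q t" "gg a t (q t) = q t" "0 \<le> q t" "q t \<le> 1"
    "\<And>s. 0 \<le> s \<Longrightarrow> s \<le> 1 \<Longrightarrow> gg a t s \<le> s \<Longrightarrow> q t \<le> s"
    "\<And>n. (gg a t ^^ n) 0 \<le> q t"
proof -
  note nn = K_facts(1)[OF K] and a0 = K_facts(2)[OF K]
  define L where "L = lim (\<lambda>n. (gg a t ^^ n) 0)"
  have m: "\<And>x y. 0 \<le> x \<Longrightarrow> x \<le> y \<Longrightarrow> y \<le> 1 \<Longrightarrow> gg a t x \<le> gg a t y"
    by (rule gg_mono[OF K t])
  have r: "\<And>x. 0 \<le> x \<Longrightarrow> x \<le> 1 \<Longrightarrow> 0 \<le> gg a t x \<and> gg a t x \<le> 1"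
    by (rule gg_range[OF K t])
  note fp = fixpt[of "gg a t", OF m r gg_cont_s[OF K t], folded L_def]
  have qL: "q t = L"
  proof (cases "t = 0")
    case True
    have "gg a t s = 1" for s unfolding gg_def True using a0 by (simp add: ps_zero)
    then have "L = 1" using fp(2) by simp
    then show ?thesis using True qdef by simp
  next
    case False
    have eq: "(pgr (khinchin a t) ^^ n) 0 = (gg a t ^^ n) 0" for n
    proof -
      have "(pgr (khinchin a t) ^^ n) 0 = (gg a t ^^ n) 0 \<and> 0 \<le> (gg a t ^^ n) 0 \<and> (gg a t ^^ n) 0 \<le> 1"
      proof (rule funpow_eq_on)
        show "pgr (khinchin a t) s = gg a t s" if "0 \<le> s" "s \<le> 1" for s
          unfolding gg_def by (rule khin_pgr[OF nn a0 t that])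
        show "0 \<le> gg a t s \<and> gg a t s \<le> 1" if "0 \<le> s" "s \<le> 1" for s
          by (rule gg_range[OF K t that])
      qed
      then show ?thesis by simp
    qed
    have "q t = lim (\<lambda>n. pmf (gw_generation (khinchin a t) n) 0)"
      using qdef False unfolding extinction_prob_def by simp
    also have "\<dots> = L" unfolding pmf_gw_0 eq L_def ..
    finally show ?thesis .
  qed
  show "(\<lambda>n. (gg a t ^^ n) 0) \<longlonglongrightarrow> q t" unfolding qL by (rule fp(1))
  show "gg a t (q t) = q t" unfolding qL by (rule fp(2))
  show "0 \<le> q t" unfolding qL by (rule fp(3))
  show "q t \<le> 1" unfolding qL by (rule fp(4))
  show "q t \<le> s" if "0 \<le> s" "s \<le> 1" "gg a t s \<le> s" for s unfolding qL by (rule fp(5)) (use that in auto)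
  show "(gg a t ^^ n) 0 \<le> q t" for n unfolding qL by (rule fp(6))
qed

lemma ps_two_terms:
  assumes "\<And>k. k \<ge> 2 \<Longrightarrow> a k = 0"
  shows "pseries a x = a 0 + a 1 * x"
proof -
  have "(\<Sum>n. a n * x ^ n) = (\<Sum>n<2. a n * x ^ n)"
    by (rule suminf_finite) (use assms in auto)
  then show ?thesis unfolding pseries_def by (simp add: numeral_2_eq_2)
qed

lemma strict_below:
  assumes K: "in_class_K a" and t: "0 < t" "ereal t < conv_radius a"
    and L: "0 \<le> L" "L < s" "s < 1" and fx: "gg a t L = L"
  shows "gg a t s < s"
proof -
  note nn = K_facts(1)[OF K] and a0 = K_facts(2)[OF K]
  have t0: "0 \<le> t" using t by simp
  have fpos: "pseries a t > 0" using ps_ge0[of a t] nn a0 t by simp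
  have fL: "pseries a (t * L) = L * pseries a t" using fx fpos unfolding gg_def
    by (simp add: field_simps)
  obtain K2 where K2: "K2 \<ge> 2" "a K2 > 0"
  proof (rule ccontr)
    assume "\<not> thesis"
    then have "\<And>k. k \<ge> 2 \<Longrightarrow> a k = 0" using that nn by (metis less_eq_real_def)
    note pe = ps_two_terms[OF this]
    have "a 0 + a 1 * (t * L) = L * (a 0 + a 1 * t)" using fL pe[where x="t * L"] pe[where x=t] by simp
    then have "a 0 * (1 - L) = 0" by (simp add: algebra_simps)
    then show False using a0 L by simp
  qed
  define b where "b k = a k * t ^ k" for k
  have sb: "b sums pseries a t" unfolding b_def pseries_def
    using ps_summable[of t a] t by (intro summable_sums) auto
  have sL: "(\<lambda>k. b k * L ^ k) sums pseries a (t * L)" unfolding b_def pseries_def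
    using ps_summable[of "t * L" a] ts_in[OF t0 t(2), of L] L
    by (simp add: power_mult_distrib mult.assoc summable_sums)
  have sS: "(\<lambda>k. b k * s ^ k) sums pseries a (t * s)" unfolding b_def pseries_def
    using ps_summable[of "t * s" a] ts_in[OF t0 t(2), of s] L
    by (simp add: power_mult_distrib mult.assoc summable_sums)
  define d where "d k = (s - L) * (b k - b k * L ^ k) - (1 - L) * (b k * s ^ k - b k * L ^ k)" for k
  have sd: "d sums ((s - L) * (pseries a t - pseries a (t * L)) - (1 - L) * (pseries a (t * s) - pseries a (t * L)))"
    unfolding d_def by (intro sums_diff sums_mult sb sL sS)
  have dform: "d k = b k * ((s - L) * (1 - L ^ k) - (1 - L) * (s ^ k - L ^ k))" for k
    unfolding d_def by (simp add: algebra_simps)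
  have bnn: "b k \<ge> 0" for k unfolding b_def using nn t by simp
  have dnn: "d k \<ge> 0" for k unfolding dform using bnn poly_ineq(1)[OF L, of k] by simp
  have dpos: "d K2 > 0" unfolding dform using K2 t poly_ineq(2)[OF L K2(1)] by (simp add: b_def)
  have "0 < suminf d" by (rule suminf_pos2[OF sums_summable[OF sd] dnn dpos])
  then have "0 < (s - L) * (pseries a t - pseries a (t * L)) - (1 - L) * (pseries a (t * s) - pseries a (t * L))"
    using sums_unique[OF sd] by simp
  also have "\<dots> = (1 - L) * (s * pseries a t - pseries a (t * s))"
    unfolding fL by (simp add: algebra_simps)
  finally have "0 < s * pseries a t - pseries a (t * s)" using L by (simp add: zero_less_mult_iff)
  then show ?thesis unfolding gg_def using fpos by (simp add: divide_less_eq)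
qed

theorem proposition6p5:
  fixes \<psi> :: "nat \<Rightarrow> real" and q :: "real \<Rightarrow> real"
  assumes "in_class_K \<psi>"
    and "\<And>t. q t = (if t = 0 then 1 else extinction_prob (khinchin \<psi> t))"
  shows "continuous_on {t. 0 \<le> t \<and> ereal t < conv_radius \<psi>} q"
proof -
  note K = assms(1) and qdef = assms(2)
  let ?I = "{t. 0 \<le> t \<and> ereal t < conv_radius \<psi>}"
  show ?thesis unfolding continuous_on_def
  proof
    fix t0 assume t0: "t0 \<in> ?I"
    then have t0': "0 \<le> t0" "ereal t0 < conv_radius \<psi>" by auto
    have evI: "eventually (\<lambda>t. t \<in> ?I) (at t0 within ?I)"
      by (simp add: eventually_at_filter)
    show "(q \<longlongrightarrow> q t0) (at t0 within ?I)"
      unfolding order_tendsto_iff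
    proof safe
      fix l assume l: "l < q t0"
      have "eventually (\<lambda>n. l < (gg \<psi> t0 ^^ n) 0) sequentially"
        using q_char(1)[OF K qdef t0'] l unfolding order_tendsto_iff by blast
      then obtain n where n: "l < (gg \<psi> t0 ^^ n) 0"
        by (meson eventually_sequentially order_refl)
      have "((\<lambda>t. (gg \<psi> t ^^ n) 0) \<longlongrightarrow> (gg \<psi> t0 ^^ n) 0) (at t0 within ?I)"
        using Phi_cont[OF K, of n] t0 unfolding continuous_on_def by blast
      then have "eventually (\<lambda>t. l < (gg \<psi> t ^^ n) 0) (at t0 within ?I)"
        using n unfolding order_tendsto_iff by blast
      then show "eventually (\<lambda>t. l < q t) (at t0 within ?I)"
        using evI
      proof (rule eventually_elim2)
        fix t assume "l < (gg \<psi> t ^^ n) 0" "t \<in> ?I"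
        then show "l < q t" using q_char(6)[OF K qdef, of t n] by force
      qed
    next
      fix u assume u: "q t0 < u"
      show "eventually (\<lambda>t. q t < u) (at t0 within ?I)"
      proof (cases "u > 1")
        case True
        show ?thesis using evI
          by (rule eventually_mono) (use q_char(4)[OF K qdef] True in force)
      next
        case False
        then have q1: "q t0 < 1" using u by simp
        have tpos: "0 < t0"
        proof (rule ccontr)
          assume "\<not> 0 < t0"
          then have "t0 = 0" using t0' by simp
          then show False using q1 qdef[of t0] by simp
        qed
        define s where "s = (q t0 + u) / 2"
        have s: "q t0 < s" "s < u" "s < 1" "0 \<le> q t0" using u False q_char(3)[OF K qdef t0']
          unfolding s_def by auto
        have gs: "gg \<psi> t0 s < s"
          by (rule strict_below[OF K tpos t0'(2) s(4) s(1) s(3) q_char(2)[OF K qdef t0']])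
        have "continuous_on ?I (\<lambda>t. gg \<psi> t s)"
          using gg_cont_comp[OF K, of "\<lambda>t. s"] s by (simp add: continuous_on_const)
        then have "((\<lambda>t. gg \<psi> t s) \<longlongrightarrow> gg \<psi> t0 s) (at t0 within ?I)"
          using t0 unfolding continuous_on_def by blast
        then have "eventually (\<lambda>t. gg \<psi> t s < s) (at t0 within ?I)"
          using gs unfolding order_tendsto_iff by blast
        then show ?thesis using evI
        proof (rule eventually_elim2)
          fix t assume "gg \<psi> t s < s" "t \<in> ?I"
          then have "q t \<le> s" using q_char(5)[OF K qdef, of t s] s by force
          then show "q t < u" using s by simp
        qed
      qed
    qed
  qed
qed

end
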